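(* Let $\mathscr C\subseteq\mathsf{CT}^{\mathsf{std}}_{\forall\forall}$ be a class of finite sets of tgds that is closed under semi-enrichment (i.e. $\Sigma\in\mathscr C$ implies $\widetilde\Sigma\in\mathscr C$). Then $\mathscr C\subseteq\mathsf{CT}^{\mathsf{sobl}}_{\forall\forall}$.
   Context: The semi-enrichment of a tgd $\xi=\alpha(\bar x,\bar y)\rightarrow\exists\bar z\,\beta(\bar x,\bar z)$ over schema $\mathbf R$ ($\bar x$ = variables in both body and head) is $\tilde\xi=\alpha(\bar x,\bar y)\rightarrow\exists\bar z\,\beta(\bar x,\bar z),H(\bar x)$ with $H$ a new relation symbol not in $\mathbf R$; $\widetilde\Sigma=\{\tilde\xi:\xi\in\Sigma\}$. Instances are finite sets of atoms over constants and nulls. A trigger $(\xi,h)$ on $I$ has $h(\alpha)\subseteq I$; it is active if no extension $h'$ has $h'(\beta)\subseteq I$; firing adds $h'(\beta)$ with fresh nulls for existential variables. Standard chase sequences fire only active triggers; semi-oblivious ones fire any triggers but never two triggers $(\xi,h),(\xi,g)$ of the same tgd with $h(\bar x)=g(\bar x)$. Infinite sequences are assumed fair; a sequence terminates if finite with no further possible step. $\mathsf{CT}^\star_{\forall\forall}$: finite tgd sets such that for every instance all $\star$-chase sequences terminate. *)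

theory Defs
  imports Main
begin

datatype trm = Cst nat | Nul nat

type_synonym fact = "nat \<times> trm list"
type_synonym inst = "fact set"
type_synonym vatom = "nat \<times> nat list"
type_synonym tgd = "vatom set \<times> vatom set"
type_synonym trigger = "tgd \<times> (nat \<Rightarrow> trm)"

definition vars :: "vatom set \<Rightarrow> nat set" where
  "vars A = (\<Union>a\<in>A. set (snd a))"

definition body :: "tgd \<Rightarrow> vatom set" where "body \<xi> = fst \<xi>"
definition head :: "tgd \<Rightarrow> vatom set" where "head \<xi> = snd \<xi>"

definition frontier :: "tgd \<Rightarrow> nat set" where
  "frontier \<xi> = vars (body \<xi>) \<inter> vars (head \<xi>)"

definition exvars :: "tgd \<Rightarrow> nat set" where
  "exvars \<xi> = vars (head \<xi>) - vars (body \<xi>)"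

definition wf_tgd :: "tgd \<Rightarrow> bool" where
  "wf_tgd \<xi> \<longleftrightarrow> finite (body \<xi>) \<and> finite (head \<xi>) \<and> body \<xi> \<noteq> {} \<and> head \<xi> \<noteq> {}"

definition inst_of :: "(nat \<Rightarrow> trm) \<Rightarrow> vatom set \<Rightarrow> inst" where
  "inst_of h A = (\<lambda>(r, xs). (r, map h xs)) ` A"

definition terms_of :: "inst \<Rightarrow> trm set" where
  "terms_of I = (\<Union>f\<in>I. set (snd f))"

definition is_trigger :: "tgd \<Rightarrow> (nat \<Rightarrow> trm) \<Rightarrow> inst \<Rightarrow> bool" where
  "is_trigger \<xi> h I \<longleftrightarrow> inst_of h (body \<xi>) \<subseteq> I"

definition active :: "tgd \<Rightarrow> (nat \<Rightarrow> trm) \<Rightarrow> inst \<Rightarrow> bool" where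
  "active \<xi> h I \<longleftrightarrow> is_trigger \<xi> h I \<and>
     \<not> (\<exists>h'. (\<forall>x\<in>vars (body \<xi>). h' x = h x) \<and> inst_of h' (head \<xi>) \<subseteq> I)"

definition fires :: "tgd \<Rightarrow> (nat \<Rightarrow> trm) \<Rightarrow> inst \<Rightarrow> inst \<Rightarrow> bool" where
  "fires \<xi> h I J \<longleftrightarrow> (\<exists>h'. (\<forall>x\<in>vars (body \<xi>). h' x = h x)
      \<and> inj_on h' (exvars \<xi>)
      \<and> (\<forall>z\<in>exvars \<xi>. (\<exists>n. h' z = Nul n) \<and> h' z \<notin> terms_of I)
      \<and> J = I \<union> inst_of h' (head \<xi>))"

datatype variant = Std | Sobl

definition applicable :: "variant \<Rightarrow> tgd set \<Rightarrow> (nat \<Rightarrow> inst) \<Rightarrow> (nat \<Rightarrow> trigger)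
    \<Rightarrow> nat \<Rightarrow> tgd \<Rightarrow> (nat \<Rightarrow> trm) \<Rightarrow> bool" where
  "applicable v \<Sigma> Is Ts i \<xi> h \<longleftrightarrow> \<xi> \<in> \<Sigma> \<and> is_trigger \<xi> h (Is i) \<and>
     (case v of
        Std \<Rightarrow> active \<xi> h (Is i)
      | Sobl \<Rightarrow> \<not> (\<exists>k<i. fst (Ts k) = \<xi> \<and> (\<forall>x\<in>frontier \<xi>. snd (Ts k) x = h x)))"

definition inf_chase_seq :: "variant \<Rightarrow> tgd set \<Rightarrow> inst \<Rightarrow> (nat \<Rightarrow> inst) \<Rightarrow> (nat \<Rightarrow> trigger) \<Rightarrow> bool" where
  "inf_chase_seq v \<Sigma> I0 Is Ts \<longleftrightarrow> Is 0 = I0 \<and>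
     (\<forall>i. applicable v \<Sigma> Is Ts i (fst (Ts i)) (snd (Ts i))
          \<and> fires (fst (Ts i)) (snd (Ts i)) (Is i) (Is (Suc i)))"

definition fair :: "variant \<Rightarrow> tgd set \<Rightarrow> (nat \<Rightarrow> inst) \<Rightarrow> (nat \<Rightarrow> trigger) \<Rightarrow> bool" where
  "fair v \<Sigma> Is Ts \<longleftrightarrow> (\<forall>i \<xi> h. applicable v \<Sigma> Is Ts i \<xi> h \<longrightarrow>
      (\<exists>j>i. \<not> applicable v \<Sigma> Is Ts j \<xi> h))"

text \<open>CT_forall_forall: finite tgd sets for which, for every (finite) instance,
every chase sequence terminates, i.e. no (fair) infinite chase sequence exists.\<close>
definition CT_AA :: "variant \<Rightarrow> tgd set set" where
  "CT_AA v = {\<Sigma>. finite \<Sigma> \<and> (\<forall>\<xi>\<in>\<Sigma>. wf_tgd \<xi>) \<and>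
     (\<forall>I0. finite I0 \<longrightarrow> \<not> (\<exists>Is Ts. inf_chase_seq v \<Sigma> I0 Is Ts \<and> fair v \<Sigma> Is Ts))}"

definition rels :: "tgd set \<Rightarrow> nat set" where
  "rels \<Sigma> = (\<Union>\<xi>\<in>\<Sigma>. fst ` (body \<xi> \<union> head \<xi>))"

definition semi_enrich :: "nat \<Rightarrow> tgd \<Rightarrow> tgd" where
  "semi_enrich H \<xi> = (body \<xi>, head \<xi> \<union> {(H, sorted_list_of_set (frontier \<xi>))})"

definition is_semi_enrichment :: "tgd set \<Rightarrow> tgd set \<Rightarrow> bool" where
  "is_semi_enrichment \<Sigma> \<Sigma>' \<longleftrightarrow> (\<exists>Hm. inj_on Hm \<Sigma> \<and> (\<forall>\<xi>\<in>\<Sigma>. Hm \<xi> \<notin> rels \<Sigma>) \<and>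
      \<Sigma>' = (\<lambda>\<xi>. semi_enrich (Hm \<xi>) \<xi>) ` \<Sigma>)"

end

theory Submission
  imports Defs
begin

lemma inst_of_Un: "inst_of h (A \<union> B) = inst_of h A \<union> inst_of h B"
  by (simp add: inst_of_def image_Un)

lemma inst_of_single: "inst_of h {(r, xs)} = {(r, map h xs)}"
  by (simp add: inst_of_def)

lemma inst_of_cong: "(\<And>x. x \<in> vars A \<Longrightarrow> g x = h x) \<Longrightarrow> inst_of g A = inst_of h A"
  unfolding inst_of_def vars_def
  apply (rule image_cong)
   apply (auto split: prod.splits)
  by (metis snd_conv)

lemma fst_inst_of: "fst ` inst_of h A = fst ` A"
  by (force simp: inst_of_def split: prod.splits)

lemma terms_inst_of: "terms_of (inst_of g A) = g ` vars A"
  by (force simp: terms_of_def inst_of_def vars_def split: prod.splits)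

lemma terms_mono: "I \<subseteq> J \<Longrightarrow> terms_of I \<subseteq> terms_of J"
  by (auto simp: terms_of_def)

lemma body_se[simp]: "body (semi_enrich H \<xi>) = body \<xi>"
  by (simp add: semi_enrich_def body_def)

lemma head_se[simp]: "head (semi_enrich H \<xi>) = head \<xi> \<union> {(H, sorted_list_of_set (frontier \<xi>))}"
  by (simp add: semi_enrich_def head_def)

lemma inst_of_insert: "inst_of h (insert (r, xs) A) = insert (r, map h xs) (inst_of h A)"
  by (simp add: inst_of_def)

lemma vars_insert: "vars (insert (r, xs) A) = set xs \<union> vars A"
  by (simp add: vars_def)

lemma vars_Un: "vars (A \<union> B) = vars A \<union> vars B"
  by (simp add: vars_def)

lemma vars_single: "vars {(r, xs)} = set xs"
  by (simp add: vars_def)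

lemma finite_frontier: "wf_tgd \<xi> \<Longrightarrow> finite (frontier \<xi>)"
proof -
  assume "wf_tgd \<xi>"
  then have "finite (head \<xi>)" by (simp add: wf_tgd_def)
  then have "finite (vars (head \<xi>))" by (simp add: vars_def)
  then show ?thesis unfolding frontier_def by simp
qed

lemma set_fl: "wf_tgd \<xi> \<Longrightarrow> set (sorted_list_of_set (frontier \<xi>)) = frontier \<xi>"
  using finite_frontier by simp

lemma exvars_se: "wf_tgd \<xi> \<Longrightarrow> exvars (semi_enrich H \<xi>) = exvars \<xi>"
proof -
  assume "wf_tgd \<xi>"
  then have "set (sorted_list_of_set (frontier \<xi>)) \<subseteq> vars (body \<xi>)"
    using set_fl[of \<xi>] by (simp add: frontier_def)
  then show ?thesis unfolding exvars_def by (simp add: vars_insert) blast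
qed

locale psetup =
  fixes \<Sigma> :: "tgd set" and Hm :: "tgd \<Rightarrow> nat" and I0 Is Ts
  assumes wf: "\<forall>\<xi>\<in>\<Sigma>. wf_tgd \<xi>"
    and inj: "inj_on Hm \<Sigma>"
    and new: "\<forall>\<xi>\<in>\<Sigma>. Hm \<xi> \<notin> rels \<Sigma>"
    and seq: "inf_chase_seq Sobl \<Sigma> I0 Is Ts"
    and fair: "fair Sobl \<Sigma> Is Ts"
begin

definition fl where "fl \<xi> = sorted_list_of_set (frontier \<xi>)"
definition E where "E \<xi> = semi_enrich (Hm \<xi>) \<xi>"
definition J where "J i = {f \<in> Is i. fst f \<in> rels \<Sigma>} \<union>
   {(Hm (fst (Ts k)), map (snd (Ts k)) (fl (fst (Ts k)))) | k. k < i}"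
definition Ts' where "Ts' k = (E (fst (Ts k)), snd (Ts k))"

lemma step: "fst (Ts i) \<in> \<Sigma> \<and> inst_of (snd (Ts i)) (body (fst (Ts i))) \<subseteq> Is i
   \<and> fires (fst (Ts i)) (snd (Ts i)) (Is i) (Is (Suc i))"
  using seq by (auto simp: inf_chase_seq_def applicable_def is_trigger_def)

lemma Is_Suc: "Is i \<subseteq> Is (Suc i)"
  using step[of i] by (auto simp: fires_def)

lemma Is_mono: "i \<le> j \<Longrightarrow> Is i \<subseteq> Is j"
  by (induction j rule: dec_induct) (use Is_Suc in auto)

lemma rels_body: "\<xi> \<in> \<Sigma> \<Longrightarrow> fst ` inst_of h (body \<xi>) \<subseteq> rels \<Sigma>"
  by (auto simp: fst_inst_of rels_def)

lemma rels_head: "\<xi> \<in> \<Sigma> \<Longrightarrow> fst ` inst_of h (head \<xi>) \<subseteq> rels \<Sigma>"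
  by (auto simp: fst_inst_of rels_def)

lemma trig_J: "\<xi> \<in> \<Sigma> \<Longrightarrow> (inst_of h (body \<xi>) \<subseteq> J i) = (inst_of h (body \<xi>) \<subseteq> Is i)"
proof
  assume a: "\<xi> \<in> \<Sigma>" "inst_of h (body \<xi>) \<subseteq> J i"
  show "inst_of h (body \<xi>) \<subseteq> Is i"
  proof
    fix f assume f: "f \<in> inst_of h (body \<xi>)"
    then have "fst f \<in> rels \<Sigma>" using rels_body[OF a(1)] by blast
    moreover have "f \<in> J i" using a f by blast
    ultimately show "f \<in> Is i" using new step unfolding J_def by fastforce
  qed
next
  assume a: "\<xi> \<in> \<Sigma>" "inst_of h (body \<xi>) \<subseteq> Is i"
  then show "inst_of h (body \<xi>) \<subseteq> J i" using rels_body[OF a(1)] unfolding J_def by blast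
qed

lemma J_mono: "i \<le> j \<Longrightarrow> J i \<subseteq> J j"
  using Is_mono unfolding J_def by fastforce

lemma H_in_J: "\<xi> \<in> \<Sigma> \<Longrightarrow> (Hm \<xi>, xs) \<in> J i \<Longrightarrow>
   (\<exists>k<i. fst (Ts k) = \<xi> \<and> xs = map (snd (Ts k)) (fl \<xi>))"
proof -
  assume a: "\<xi> \<in> \<Sigma>" "(Hm \<xi>, xs) \<in> J i"
  have "Hm \<xi> \<notin> rels \<Sigma>" using new a by blast
  then obtain k where k: "k < i" "Hm \<xi> = Hm (fst (Ts k))" "xs = map (snd (Ts k)) (fl (fst (Ts k)))"
    using a(2) unfolding J_def by auto
  have "fst (Ts k) = \<xi>" using inj k(2) a(1) step[of k] by (metis inj_on_def)
  then show ?thesis using k by auto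
qed

lemma map_fl: "\<xi> \<in> \<Sigma> \<Longrightarrow> (map g (fl \<xi>) = map h (fl \<xi>)) = (\<forall>x\<in>frontier \<xi>. g x = h x)"
  using set_fl[of \<xi>] wf unfolding fl_def by (simp add: map_eq_conv)

lemma fl_body: "\<xi> \<in> \<Sigma> \<Longrightarrow> set (fl \<xi>) \<subseteq> vars (body \<xi>)"
  using set_fl[of \<xi>] wf unfolding fl_def frontier_def by auto

lemma not_active:
  assumes x: "\<xi> \<in> \<Sigma>" and k: "k < i" "fst (Ts k) = \<xi>" and ag: "\<forall>x\<in>frontier \<xi>. snd (Ts k) x = h x"
  shows "\<not> active (E \<xi>) h (J i)"
proof -
  obtain g' where g': "\<forall>x\<in>vars (body \<xi>). g' x = snd (Ts k) x"
    "Is (Suc k) = Is k \<union> inst_of g' (head \<xi>)"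
    using step[of k] k unfolding fires_def by blast
  define h'' where "h'' x = (if x \<in> vars (body \<xi>) then h x else g' x)" for x
  have e1: "inst_of h'' (head \<xi>) = inst_of g' (head \<xi>)"
    by (rule inst_of_cong) (use ag g'(1) in \<open>auto simp: h''_def frontier_def\<close>)
  have "inst_of g' (head \<xi>) \<subseteq> J (Suc k)"
    using g'(2) rels_head[OF x] unfolding J_def by blast
  also have "\<dots> \<subseteq> J i" using J_mono k by simp
  finally have 1: "inst_of h'' (head \<xi>) \<subseteq> J i" using e1 by simp
  have "map h'' (fl \<xi>) = map h (fl \<xi>)" using fl_body[OF x] by (auto simp: h''_def)
  also have "\<dots> = map (snd (Ts k)) (fl \<xi>)" using map_fl[OF x] ag by metis
  finally have "(Hm \<xi>, map h'' (fl \<xi>)) \<in> J i" using k unfolding J_def by auto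
  then have "inst_of h'' (head (E \<xi>)) \<subseteq> J i"
    using 1 by (simp add: E_def inst_of_insert fl_def)
  moreover have "\<forall>x\<in>vars (body (E \<xi>)). h'' x = h x" by (simp add: E_def h''_def)
  ultimately show ?thesis unfolding active_def by blast
qed

lemma is_active:
  assumes x: "\<xi> \<in> \<Sigma>" and t: "is_trigger \<xi> h (Is i)"
    and nk: "\<not> (\<exists>k<i. fst (Ts k) = \<xi> \<and> (\<forall>x\<in>frontier \<xi>. snd (Ts k) x = h x))"
  shows "active (E \<xi>) h (J i)"
proof -
  have "is_trigger (E \<xi>) h (J i)" using t trig_J[OF x] by (simp add: is_trigger_def E_def)
  moreover have "\<not> (\<exists>h'. (\<forall>x\<in>vars (body (E \<xi>)). h' x = h x) \<and> inst_of h' (head (E \<xi>)) \<subseteq> J i)"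
  proof
    assume "\<exists>h'. (\<forall>x\<in>vars (body (E \<xi>)). h' x = h x) \<and> inst_of h' (head (E \<xi>)) \<subseteq> J i"
    then obtain h' where h': "\<forall>x\<in>vars (body \<xi>). h' x = h x" "inst_of h' (head (E \<xi>)) \<subseteq> J i"
      by (auto simp: E_def)
    then have "(Hm \<xi>, map h' (fl \<xi>)) \<in> J i"
      by (simp add: E_def inst_of_insert fl_def)
    then obtain k where k: "k < i" "fst (Ts k) = \<xi>" "map h' (fl \<xi>) = map (snd (Ts k)) (fl \<xi>)"
      using H_in_J[OF x] by blast
    have "map h' (fl \<xi>) = map h (fl \<xi>)" using fl_body[OF x] h'(1) by auto
    then have "\<forall>x\<in>frontier \<xi>. snd (Ts k) x = h x" using k(3) map_fl[OF x] by metis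
    then show False using nk k by blast
  qed
  ultimately show ?thesis unfolding active_def by blast
qed

lemma terms_J: "terms_of (J i) \<subseteq> terms_of (Is i)"
proof -
  have "terms_of {f \<in> Is i. fst f \<in> rels \<Sigma>} \<subseteq> terms_of (Is i)" by (rule terms_mono) auto
  moreover have "terms_of {(Hm (fst (Ts k)), map (snd (Ts k)) (fl (fst (Ts k)))) | k. k < i}
     \<subseteq> terms_of (Is i)"
  proof
    fix t assume "t \<in> terms_of {(Hm (fst (Ts k)), map (snd (Ts k)) (fl (fst (Ts k)))) | k. k < i}"
    then obtain k where k: "k < i" "t \<in> snd (Ts k) ` set (fl (fst (Ts k)))"
      by (auto simp: terms_of_def)
    then have "t \<in> snd (Ts k) ` vars (body (fst (Ts k)))" using fl_body step[of k] by blast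
    then have "t \<in> terms_of (inst_of (snd (Ts k)) (body (fst (Ts k))))" by (simp add: terms_inst_of)
    also have "\<dots> \<subseteq> terms_of (Is k)" using step[of k] by (intro terms_mono) auto
    also have "\<dots> \<subseteq> terms_of (Is i)" using Is_mono k by (intro terms_mono) auto
    finally show "t \<in> terms_of (Is i)" .
  qed
  ultimately show ?thesis unfolding J_def terms_of_def by blast
qed

lemma std_seq: "inf_chase_seq Std (E ` \<Sigma>) (J 0) J Ts'"
  unfolding inf_chase_seq_def
proof (intro conjI allI)
  fix i
  define \<xi> h where "\<xi> = fst (Ts i)" and "h = snd (Ts i)"
  have x: "\<xi> \<in> \<Sigma>" and t: "inst_of h (body \<xi>) \<subseteq> Is i" and fi: "fires \<xi> h (Is i) (Is (Suc i))"
    using step[of i] by (auto simp: \<xi>_def h_def)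
  have nk: "\<not> (\<exists>k<i. fst (Ts k) = \<xi> \<and> (\<forall>x\<in>frontier \<xi>. snd (Ts k) x = h x))"
    using seq by (auto simp: inf_chase_seq_def applicable_def \<xi>_def h_def)
  have "active (E \<xi>) h (J i)" using is_active[OF x _ nk] t by (simp add: is_trigger_def)
  then show "applicable Std (E ` \<Sigma>) J Ts' i (fst (Ts' i)) (snd (Ts' i))"
    using x by (simp add: applicable_def Ts'_def \<xi>_def h_def active_def)
  obtain h' where h': "\<forall>x\<in>vars (body \<xi>). h' x = h x" "inj_on h' (exvars \<xi>)"
    "\<forall>z\<in>exvars \<xi>. (\<exists>n. h' z = Nul n) \<and> h' z \<notin> terms_of (Is i)"
    "Is (Suc i) = Is i \<union> inst_of h' (head \<xi>)"
    using fi unfolding fires_def by blast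
  have ex: "exvars (E \<xi>) = exvars \<xi>" using exvars_se wf x by (simp add: E_def)
  have mh: "map h' (fl \<xi>) = map h (fl \<xi>)" using fl_body[OF x] h'(1) by auto
  have "J (Suc i) = J i \<union> inst_of h' (head (E \<xi>))"
  proof -
    have a: "{f \<in> Is (Suc i). fst f \<in> rels \<Sigma>} = {f \<in> Is i. fst f \<in> rels \<Sigma>} \<union> inst_of h' (head \<xi>)"
      using h'(4) rels_head[OF x] by blast
    have b: "{(Hm (fst (Ts k)), map (snd (Ts k)) (fl (fst (Ts k)))) | k. k < Suc i} =
       {(Hm (fst (Ts k)), map (snd (Ts k)) (fl (fst (Ts k)))) | k. k < i} \<union> {(Hm \<xi>, map h (fl \<xi>))}"
      by (auto simp: less_Suc_eq \<xi>_def h_def)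
    have c: "inst_of h' (head (E \<xi>)) = inst_of h' (head \<xi>) \<union> {(Hm \<xi>, map h (fl \<xi>))}"
      unfolding E_def head_se inst_of_Un inst_of_single fl_def mh[unfolded fl_def] by blast
    show ?thesis unfolding J_def a b c by blast
  qed
  then show "fires (fst (Ts' i)) (snd (Ts' i)) (J i) (J (Suc i))"
    unfolding fires_def Ts'_def using h' ex terms_J[of i]
    by (auto simp: \<xi>_def h_def E_def intro!: exI[of _ h'])
qed simp

lemma std_fair: "fair Std (E ` \<Sigma>) J Ts'"
  unfolding fair_def
proof (intro allI impI)
  fix i \<xi>' h
  assume ap: "applicable Std (E ` \<Sigma>) J Ts' i \<xi>' h"
  then obtain \<xi> where x: "\<xi> \<in> \<Sigma>" "\<xi>' = E \<xi>" by (auto simp: applicable_def)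
  have ac: "active (E \<xi>) h (J i)" using ap x by (simp add: applicable_def)
  have t: "is_trigger \<xi> h (Is i)" using ac trig_J[OF x(1)]
    by (simp add: active_def is_trigger_def E_def)
  have "\<not> (\<exists>k<i. fst (Ts k) = \<xi> \<and> (\<forall>x\<in>frontier \<xi>. snd (Ts k) x = h x))"
    using not_active[OF x(1)] ac by blast
  then have "applicable Sobl \<Sigma> Is Ts i \<xi> h"
    using x t by (simp add: applicable_def)
  then obtain j where j: "j > i" "\<not> applicable Sobl \<Sigma> Is Ts j \<xi> h"
    using fair unfolding fair_def by blast
  have "\<not> applicable Std (E ` \<Sigma>) J Ts' j \<xi>' h"
  proof
    assume a: "applicable Std (E ` \<Sigma>) J Ts' j \<xi>' h"
    then have ac: "active (E \<xi>) h (J j)" using x by (simp add: applicable_def)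
    have t: "is_trigger \<xi> h (Is j)" using ac trig_J[OF x(1)]
      by (simp add: active_def is_trigger_def E_def)
    then obtain k where "k < j" "fst (Ts k) = \<xi>" "\<forall>x\<in>frontier \<xi>. snd (Ts k) x = h x"
      using j(2) x by (auto simp: applicable_def)
    then show False using not_active[OF x(1)] ac by blast
  qed
  then show "\<exists>j>i. \<not> applicable Std (E ` \<Sigma>) J Ts' j \<xi>' h" using j(1) by blast
qed

lemma J0: "J 0 \<subseteq> I0"
  using seq unfolding J_def inf_chase_seq_def by auto

end

theorem proposition5:
  fixes \<C> :: "tgd set set"
  assumes "\<C> \<subseteq> CT_AA Std"
    and "\<forall>\<Sigma>\<in>\<C>. \<exists>\<Sigma>'. is_semi_enrichment \<Sigma> \<Sigma>' \<and> \<Sigma>' \<in> \<C>"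
  shows "\<C> \<subseteq> CT_AA Sobl"
proof
  fix \<Sigma> assume S: "\<Sigma> \<in> \<C>"
  then have c: "\<Sigma> \<in> CT_AA Std" using assms(1) by blast
  obtain \<Sigma>' where s': "is_semi_enrichment \<Sigma> \<Sigma>'" "\<Sigma>' \<in> \<C>" using assms(2) S by blast
  then obtain Hm where hm: "inj_on Hm \<Sigma>" "\<forall>\<xi>\<in>\<Sigma>. Hm \<xi> \<notin> rels \<Sigma>"
    "\<Sigma>' = (\<lambda>\<xi>. semi_enrich (Hm \<xi>) \<xi>) ` \<Sigma>"
    unfolding is_semi_enrichment_def by blast
  have c': "\<Sigma>' \<in> CT_AA Std" using s'(2) assms(1) by blast
  show "\<Sigma> \<in> CT_AA Sobl"
    unfolding CT_AA_def
  proof (intro CollectI conjI allI impI notI)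
    show "finite \<Sigma>" "\<forall>\<xi>\<in>\<Sigma>. wf_tgd \<xi>" using c by (auto simp: CT_AA_def)
  next
    fix I0 assume fI: "finite I0" and "\<exists>Is Ts. inf_chase_seq Sobl \<Sigma> I0 Is Ts \<and> fair Sobl \<Sigma> Is Ts"
    then obtain Is Ts where it: "inf_chase_seq Sobl \<Sigma> I0 Is Ts" "fair Sobl \<Sigma> Is Ts" by blast
    interpret psetup \<Sigma> Hm I0 Is Ts
      using c hm it by unfold_locales (auto simp: CT_AA_def)
    have eq: "E ` \<Sigma> = \<Sigma>'" using hm(3) by (simp add: E_def[abs_def])
    have "finite (J 0)" using J0 fI finite_subset by blast
    then show False using c' std_seq std_fair unfolding eq CT_AA_def by blast
  qed
qed

end
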